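(* Any two demicaps in $AG(4,3)$ are affinely equivalent: if $D_1,D_2$ are demicaps, there is an affine transformation $v\mapsto Av+b$ with $A\in GL(4,3)$, $b\in\mathbb{F}_3^4$, mapping $D_1$ onto $D_2$.
   Context: $AG(4,3)$ is the affine space $\mathbb{F}_3^4$; a line is a set of three distinct points $\{x,y,z\}$ with $x+y+z=0$. A cap is a set of points containing no line. A hyperplane is a $3$-dimensional affine subspace of $\mathbb{F}_3^4$; a set of points is co-hyperplanar if it lies in a common hyperplane. For a point $a$, an $a$-line is a pair of points $\{b,c\}$ such that $\{a,b,c\}$ is a line. A demicap with anchor point $a$ is a cap consisting of the $10$ points of five $a$-lines such that no four of these five $a$-lines are co-hyperplanar. *)

theory Defs
  imports "HOL-Analysis.Analysis" "HOL-Library.Numeral_Type"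
begin

text \<open>Points of AG(4,3) are vectors in F_3^4, modelled as the type 3^4
  (type 3 is the integers mod 3, a commutative ring, here the field F_3).\<close>

type_synonym pt = "3 ^ 4"

definition is_line :: "pt set \<Rightarrow> bool" where
  "is_line S \<longleftrightarrow> (\<exists>x y z. S = {x, y, z} \<and> x \<noteq> y \<and> x \<noteq> z \<and> y \<noteq> z \<and> x + y + z = 0)"

definition is_cap :: "pt set \<Rightarrow> bool" where
  "is_cap C \<longleftrightarrow> (\<forall>S. S \<subseteq> C \<longrightarrow> \<not> is_line S)"

text \<open>Linear subspace of F_3^4 (over F_3).\<close>
definition is_subspace3 :: "pt set \<Rightarrow> bool" where
  "is_subspace3 V \<longleftrightarrow> 0 \<in> V \<and> (\<forall>x\<in>V. \<forall>y\<in>V. x + y \<in> V)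
     \<and> (\<forall>c::3. \<forall>x\<in>V. c *s x \<in> V)"

text \<open>Hyperplane: a 3-dimensional affine subspace, i.e. a translate of a linear
  subspace of dimension 3 (equivalently of cardinality 3^3 over F_3).\<close>
definition is_hyperplane :: "pt set \<Rightarrow> bool" where
  "is_hyperplane H \<longleftrightarrow> (\<exists>b V. is_subspace3 V \<and> card V = 3 ^ 3 \<and> H = (\<lambda>v. b + v) ` V)"

definition cohyperplanar :: "pt set \<Rightarrow> bool" where
  "cohyperplanar S \<longleftrightarrow> (\<exists>H. is_hyperplane H \<and> S \<subseteq> H)"

definition is_a_line :: "pt \<Rightarrow> pt set \<Rightarrow> bool" where
  "is_a_line a P \<longleftrightarrow> (\<exists>b c. P = {b, c} \<and> b \<noteq> c \<and> is_line {a, b, c})"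

definition is_demicap_anchor :: "pt \<Rightarrow> pt set \<Rightarrow> bool" where
  "is_demicap_anchor a D \<longleftrightarrow> is_cap D \<and>
     (\<exists>L. card L = 5 \<and> (\<forall>P\<in>L. is_a_line a P) \<and> D = \<Union>L \<and> card D = 10 \<and>
          (\<forall>L'. L' \<subseteq> L \<and> card L' = 4 \<longrightarrow> \<not> cohyperplanar (\<Union>L')))"

definition is_demicap :: "pt set \<Rightarrow> bool" where
  "is_demicap D \<longleftrightarrow> (\<exists>a. is_demicap_anchor a D)"

end

theory Submission
  imports Defs
begin

lemma ex3: "(x::3) = 0 \<or> x = 1 \<or> x = -1"
proof (induct x)
  case (of_int z)
  then have "z = 0 \<or> z = 1 \<or> z = 2" by fastforce
  then show ?case by auto
qed

lemma sq3: "(c::3) \<noteq> 0 \<Longrightarrow> c * c = 1"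
  using ex3[of c] by auto

lemma three3: "(x::3) + x + x = 0"
  using ex3[of x] by auto

lemma three_pt: "(a::pt) + a + a = 0"
  unfolding vec_eq_iff by (simp only: vector_add_component zero_index three3) simp

lemma UNIV4: "UNIV = {1, 2, 3, 4::4}"
proof -
  have "x = 1 \<or> x = 2 \<or> x = 3 \<or> x = 4" for x :: 4
  proof (induct x)
    case (of_int z)
    then have "z = 0 \<or> z = 1 \<or> z = 2 \<or> z = 3" by fastforce
    then show ?case by auto
  qed
  then show ?thesis by auto
qed

lemma sum4: "(\<Sum>i\<in>(UNIV::4 set). f i) = f 1 + f 2 + f 3 + f 4"
proof -
  have d: "(1::4) \<notin> {2,3,4}" "(2::4) \<notin> {3,4}" "(3::4) \<noteq> 4" by simp_all
  have "(\<Sum>i\<in>{1,2,3,4::4}. f i) = f 1 + (f 2 + (f 3 + f 4))"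
    using d by (simp only: sum.insert finite.emptyI finite.insertI sum.empty insert_iff empty_iff) simp
  then show ?thesis unfolding UNIV_4 by (simp only: add.assoc)
qed

definition dot :: "pt \<Rightarrow> pt \<Rightarrow> 3" where
  "dot y u = (\<Sum>i\<in>UNIV. y$i * u$i)"

lemma dot_add: "dot y (u + v) = dot y u + dot y v"
  by (simp add: dot_def sum.distrib distrib_left)
lemma dot_smult: "dot y (c *s u) = c * dot y u"
  by (simp add: dot_def sum_distrib_left mult_ac)
lemma dot_neg: "dot y (- u) = - dot y u"
  by (simp add: dot_def sum_negf)
lemma dot_diff: "dot y (u - v) = dot y u - dot y v"
  by (simp add: dot_def sum_subtractf right_diff_distrib)
lemma dot_diff_left: "dot (y - y') u = dot y u - dot y' u"
  by (simp add: dot_def sum_subtractf left_diff_distrib)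
lemma dot_zero: "dot y 0 = 0"
  by (simp add: dot_def)
lemma dot_axis: "dot y (axis k 1) = y $ k"
proof -
  have "dot y (axis k 1) = (\<Sum>i\<in>UNIV. if i = k then y $ i else 0)"
    unfolding dot_def axis_def by (intro sum.cong) auto
  then show ?thesis by simp
qed

lemma orth3: "\<exists>y. y \<noteq> 0 \<and> dot y p = 0 \<and> dot y q = 0 \<and> dot y r = 0"
proof -
  define f where "f = (\<lambda>y. (dot y p, dot y q, dot y r))"
  have "\<not> inj f"
  proof
    assume "inj f"
    then have "card (UNIV::pt set) \<le> card (UNIV :: (3 \<times> 3 \<times> 3) set)"
      by (intro card_inj_on_le) auto
    then show False by simp
  qed
  then obtain y y' where "y \<noteq> y'" "f y = f y'" unfolding inj_def by auto
  then show ?thesis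
    by (intro exI[of _ "y - y'"]) (auto simp: f_def dot_diff_left)
qed

definition orth4 :: "pt \<Rightarrow> pt \<Rightarrow> pt \<Rightarrow> pt \<Rightarrow> bool" where
  "orth4 p q r s \<longleftrightarrow> (\<exists>y. y \<noteq> 0 \<and> dot y p = 0 \<and> dot y q = 0 \<and> dot y r = 0 \<and> dot y s = 0)"

lemma hyperplane_ker:
  assumes "y \<noteq> 0"
  shows "is_hyperplane ((\<lambda>v. a + v) ` {x. dot y x = 0})"
proof -
  define V where "V = {x. dot y x = 0}"
  have sub: "is_subspace3 V"
    unfolding is_subspace3_def V_def by (auto simp: dot_zero dot_add dot_smult)
  obtain k where k: "y $ k \<noteq> 0" using assms by (auto simp: vec_eq_iff)
  define e where "e = y $ k *s axis k 1"
  have de: "dot y e = 1" using k by (simp add: e_def dot_smult dot_axis sq3)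
  have "bij_betw (\<lambda>(x, t). x + t *s e) (V \<times> (UNIV::3 set)) UNIV"
  proof (rule bij_betwI')
    fix xt xt' assume "xt \<in> V \<times> (UNIV::3 set)" "xt' \<in> V \<times> (UNIV::3 set)"
    then obtain x t x' t' where xt: "xt = (x, t)" "xt' = (x', t')" "dot y x = 0" "dot y x' = 0"
      by (auto simp: V_def)
    show "((case xt of (x, t) \<Rightarrow> x + t *s e) = (case xt' of (x, t) \<Rightarrow> x + t *s e)) = (xt = xt')"
    proof
      assume h: "(case xt of (x, t) \<Rightarrow> x + t *s e) = (case xt' of (x, t) \<Rightarrow> x + t *s e)"
      then have "dot y (x + t *s e) = dot y (x' + t' *s e)" using xt by simp
      then have "t = t'" using xt de by (simp add: dot_add dot_smult)
      then show "xt = xt'" using h xt by simp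
    qed simp
  next
    fix xt show "(case xt of (x, t) \<Rightarrow> x + t *s e) \<in> UNIV" by simp
  next
    fix z :: pt
    have "dot y (z - dot y z *s e) = 0" using de by (simp add: dot_diff dot_smult)
    then show "\<exists>xt\<in>V \<times> UNIV. z = (case xt of (x, t) \<Rightarrow> x + t *s e)"
      by (intro bexI[of _ "(z - dot y z *s e, dot y z)"]) (auto simp: V_def)
  qed
  then have "card (V \<times> (UNIV::3 set)) = card (UNIV::pt set)" by (rule bij_betw_same_card)
  then have "card V * 3 = 81" by (simp add: card_cartesian_product)
  then have "card V = 3 ^ 3" by simp
  then show ?thesis unfolding is_hyperplane_def using sub V_def by blast
qed

lemma hyp_of_orth:
  assumes "orth4 p q r s"
  shows "cohyperplanar ({a + p, a - p} \<union> {a + q, a - q} \<union> {a + r, a - r} \<union> {a + s, a - s})"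
proof -
  obtain y where y: "y \<noteq> 0" "dot y p = 0" "dot y q = 0" "dot y r = 0" "dot y s = 0"
    using assms unfolding orth4_def by blast
  define H where "H = (\<lambda>v. a + v) ` {x. dot y x = 0}"
  have mem: "a + u \<in> H" "a - u \<in> H" if "dot y u = 0" for u
  proof -
    show "a + u \<in> H" unfolding H_def using that by auto
    have "a - u = a + (- u)" by simp
    then show "a - u \<in> H" unfolding H_def using that
      by (metis (mono_tags, lifting) dot_neg image_eqI mem_Collect_eq neg_equal_0_iff_equal)
  qed
  show ?thesis unfolding cohyperplanar_def
    using hyperplane_ker[OF y(1), of a] mem y unfolding H_def[symmetric] by blast
qed

lemma a_line:
  assumes "is_a_line a P"
  shows "\<exists>v. P = {a + v, a - v}"
proof -
  obtain b c where P: "P = {b, c}" "b \<noteq> c" and l: "is_line {a, b, c}"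
    using assms unfolding is_a_line_def by blast
  obtain x y z where xyz: "{a, b, c} = {x, y, z}" "x \<noteq> y" "x \<noteq> z" "y \<noteq> z" "x + y + z = 0"
    using l unfolding is_line_def by blast
  have "card {a, b, c} = 3" using xyz by simp
  have "a \<noteq> b"
  proof
    assume "a = b" then have "{a, b, c} = {b, c}" by auto
    then show False using \<open>card {a, b, c} = 3\<close> P(2) by simp
  qed
  have "a \<noteq> c"
  proof
    assume "a = c" then have "{a, b, c} = {b, c}" by auto
    then show False using \<open>card {a, b, c} = 3\<close> P(2) by simp
  qed
  then have "sum id {a, b, c} = a + b + c" using P \<open>a \<noteq> b\<close> by (simp add: add.assoc)
  moreover have "sum id {x, y, z} = x + y + z" using xyz by (simp add: add.assoc)
  ultimately have s: "a + b + c = 0" using xyz by simp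
  have "a - (b - a) = (a + a + a) + c - (a + b + c)" by (simp add: algebra_simps)
  then have "a - (b - a) = c" using s three_pt[of a] by simp
  then have "P = {a + (b - a), a - (b - a)}" using P by simp
  then show ?thesis by blast
qed

lemma card5:
  assumes "card L = 5"
  shows "\<exists>P1 P2 P3 P4 P5. L = {P1, P2, P3, P4, P5} \<and> distinct [P1, P2, P3, P4, P5]"
proof -
  have "card L = Suc 4" using assms by simp
  then obtain P1 L1 where 1: "L = insert P1 L1" "P1 \<notin> L1" "card L1 = 4"
    using card_eq_SucD[of L 4] by blast
  then have "card L1 = Suc 3" by simp
  then obtain P2 L2 where 2: "L1 = insert P2 L2" "P2 \<notin> L2" "card L2 = 3"
    using card_eq_SucD[of L1 3] by blast
  then have "card L2 = Suc 2" by simp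
  then obtain P3 L3 where 3: "L2 = insert P3 L3" "P3 \<notin> L3" "card L3 = 2"
    using card_eq_SucD[of L2 2] by blast
  then have "card L3 = Suc 1" by simp
  then obtain P4 L4 where 4: "L3 = insert P4 L4" "P4 \<notin> L4" "card L4 = 1"
    using card_eq_SucD[of L3 1] by blast
  then obtain P5 where 5: "L4 = {P5}" by (auto simp: card_1_singleton_iff)
  have eq: "L = {P1, P2, P3, P4, P5}" using 1(1) 2(1) 3(1) 4(1) 5 by simp
  have d: "distinct [P1, P2, P3, P4, P5]" using 1(1,2) 2(1,2) 3(1,2) 4(1,2) 5 by simp
  show ?thesis using eq d by blast
qed

lemma demicap_vecs:
  assumes "is_demicap_anchor a D"
  shows "\<exists>v1 v2 v3 v4 v5. D = {a+v1,a-v1} \<union> {a+v2,a-v2} \<union> {a+v3,a-v3} \<union> {a+v4,a-v4} \<union> {a+v5,a-v5}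
     \<and> \<not> orth4 v1 v2 v3 v4 \<and> \<not> orth4 v2 v3 v4 v5 \<and> \<not> orth4 v1 v3 v4 v5
     \<and> \<not> orth4 v1 v2 v4 v5 \<and> \<not> orth4 v1 v2 v3 v5"
proof -
  obtain L where L: "card L = 5" "\<forall>P\<in>L. is_a_line a P" "D = \<Union>L"
     and NC: "\<And>L'. L' \<subseteq> L \<Longrightarrow> card L' = 4 \<Longrightarrow> \<not> cohyperplanar (\<Union>L')"
    using assms unfolding is_demicap_anchor_def by blast
  obtain P1 P2 P3 P4 P5 where P: "L = {P1,P2,P3,P4,P5}" "distinct [P1,P2,P3,P4,P5]"
    using card5[OF L(1)] by blast
  obtain v1 where v1: "P1 = {a+v1,a-v1}" using a_line L(2) P(1) by blast
  obtain v2 where v2: "P2 = {a+v2,a-v2}" using a_line L(2) P(1) by blast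
  obtain v3 where v3: "P3 = {a+v3,a-v3}" using a_line L(2) P(1) by blast
  obtain v4 where v4: "P4 = {a+v4,a-v4}" using a_line L(2) P(1) by blast
  obtain v5 where v5: "P5 = {a+v5,a-v5}" using a_line L(2) P(1) by blast
  have key: "\<not> orth4 p q r s"
    if "{Q1, Q2, Q3, Q4} \<subseteq> L" "card {Q1,Q2,Q3,Q4} = 4" "Q1 = {a+p,a-p}" "Q2 = {a+q,a-q}"
       "Q3 = {a+r,a-r}" "Q4 = {a+s,a-s}" for Q1 Q2 Q3 Q4 p q r s
  proof
    assume "orth4 p q r s"
    then have "cohyperplanar (\<Union>{Q1,Q2,Q3,Q4})" using hyp_of_orth[of p q r s a] that(3-6)
      by (simp add: Un_assoc)
    then show False using NC that(1,2) by blast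
  qed
  have "\<not> orth4 v1 v2 v3 v4" by (rule key[OF _ _ v1 v2 v3 v4]) (use P in auto)
  moreover have "\<not> orth4 v2 v3 v4 v5" by (rule key[OF _ _ v2 v3 v4 v5]) (use P in auto)
  moreover have "\<not> orth4 v1 v3 v4 v5" by (rule key[OF _ _ v1 v3 v4 v5]) (use P in auto)
  moreover have "\<not> orth4 v1 v2 v4 v5" by (rule key[OF _ _ v1 v2 v4 v5]) (use P in auto)
  moreover have "\<not> orth4 v1 v2 v3 v5" by (rule key[OF _ _ v1 v2 v3 v5]) (use P in auto)
  moreover have "D = {a+v1,a-v1} \<union> {a+v2,a-v2} \<union> {a+v3,a-v3} \<union> {a+v4,a-v4} \<union> {a+v5,a-v5}"
    using L(3) P(1) v1 v2 v3 v4 v5 by (simp add: Un_assoc)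
  ultimately show ?thesis by blast
qed

lemma dep1:
  assumes "x1 \<noteq> 0" "x1 *s p + x2 *s q + x3 *s r + x4 *s s = 0"
  shows "orth4 p q r s"
proof -
  obtain y where y: "y \<noteq> 0" "dot y q = 0" "dot y r = 0" "dot y s = 0" using orth3 by blast
  have "dot y (x1 *s p + x2 *s q + x3 *s r + x4 *s s) = 0" using assms(2) by (simp add: dot_zero)
  then have "x1 * dot y p = 0" using y by (simp add: dot_add dot_smult)
  then have "x1 * x1 * dot y p = 0" by (metis mult.assoc mult_zero_right)
  then have "dot y p = 0" using sq3[OF assms(1)] by simp
  then show ?thesis unfolding orth4_def using y by blast
qed

lemma indep:
  assumes "\<not> orth4 p q r s" "x1 *s p + x2 *s q + x3 *s r + x4 *s s = 0"
  shows "x1 = 0 \<and> x2 = 0 \<and> x3 = 0 \<and> x4 = 0"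
proof (intro conjI)
  have perm: "orth4 q p r s \<Longrightarrow> orth4 p q r s" "orth4 r p q s \<Longrightarrow> orth4 p q r s"
     "orth4 s p q r \<Longrightarrow> orth4 p q r s" unfolding orth4_def by blast+
  show "x1 = 0" using dep1[of x1 p x2 q x3 r x4 s] assms by blast
  show "x2 = 0"
  proof (rule ccontr)
    assume "x2 \<noteq> 0"
    moreover have "x2 *s q + x1 *s p + x3 *s r + x4 *s s = 0" using assms(2) by (simp add: ac_simps)
    ultimately show False using dep1 perm assms(1) by blast
  qed
  show "x3 = 0"
  proof (rule ccontr)
    assume "x3 \<noteq> 0"
    moreover have "x3 *s r + x1 *s p + x2 *s q + x4 *s s = 0" using assms(2) by (simp add: ac_simps)
    ultimately show False using dep1 perm assms(1) by blast
  qed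
  show "x4 = 0"
  proof (rule ccontr)
    assume "x4 \<noteq> 0"
    moreover have "x4 *s s + x1 *s p + x2 *s q + x3 *s r = 0" using assms(2) by (simp add: ac_simps)
    ultimately show False using dep1 perm assms(1) by blast
  qed
qed

definition lc :: "pt \<Rightarrow> pt \<Rightarrow> pt \<Rightarrow> pt \<Rightarrow> 3^4 \<Rightarrow> pt" where
  "lc p q r s x = x$1 *s p + x$2 *s q + x$3 *s r + x$4 *s s"

definition colmat :: "pt \<Rightarrow> pt \<Rightarrow> pt \<Rightarrow> pt \<Rightarrow> 3^4^4" where
  "colmat p q r s = (\<chi> i k. (if k = 1 then p else if k = 2 then q else if k = 3 then r else s) $ i)"

lemma colmat_mult: "colmat p q r s *v x = lc p q r s x"
  by (simp add: vec_eq_iff matrix_vector_mult_def colmat_def lc_def sum4 mult.commute)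

lemma vec4_eq: "(x::3^4) = y \<longleftrightarrow> x$1 = y$1 \<and> x$2 = y$2 \<and> x$3 = y$3 \<and> x$4 = y$4"
proof -
  have h: "\<And>i::4. i = 1 \<or> i = 2 \<or> i = 3 \<or> i = 4" using UNIV4 by blast
  show ?thesis unfolding vec_eq_iff
  proof safe
    fix i :: 4
    assume "x$1 = y$1" "x$2 = y$2" "x$3 = y$3" "x$4 = y$4"
    then show "x$i = y$i" using h[of i] by (elim disjE) simp_all
  qed simp_all
qed

lemma lc_inj:
  assumes "\<not> orth4 p q r s"
  shows "inj (lc p q r s)"
proof (rule injI)
  fix x y assume h: "lc p q r s x = lc p q r s y"
  have "lc p q r s x - lc p q r s y =
     (x$1 - y$1) *s p + (x$2 - y$2) *s q + (x$3 - y$3) *s r + (x$4 - y$4) *s s"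
  proof (rule iffD2[OF vec_eq_iff], rule allI)
    fix i
    show "(lc p q r s x - lc p q r s y) $ i =
     ((x$1 - y$1) *s p + (x$2 - y$2) *s q + (x$3 - y$3) *s r + (x$4 - y$4) *s s) $ i"
      unfolding lc_def vector_minus_component vector_add_component vector_smult_component
      by (simp only: left_diff_distrib add_diff_add)
  qed
  then have "(x$1 - y$1) *s p + (x$2 - y$2) *s q + (x$3 - y$3) *s r + (x$4 - y$4) *s s = 0"
    using h by simp
  then have h2: "x$1 - y$1 = 0 \<and> x$2 - y$2 = 0 \<and> x$3 - y$3 = 0 \<and> x$4 - y$4 = 0"
    by (rule indep[OF assms])
  show "x = y" unfolding vec4_eq using h2 by simp
qed

lemma inv_of_inj:
  fixes A :: "'a::{comm_ring_1,finite}^'n^'n"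
  assumes "\<And>x. A *v x = 0 \<Longrightarrow> x = 0"
  shows "invertible A"
proof -
  have inj: "inj ((*v) A)"
  proof (rule injI)
    fix x y assume "A *v x = A *v y"
    then have "A *v (x - y) = 0" by (simp add: matrix_vector_mult_diff_distrib)
    then show "x = y" using assms[of "x - y"] by simp
  qed
  have "surj ((*v) A)" by (rule finite_UNIV_inj_surj) (simp_all add: inj)
  define g where "g = inv ((*v) A)"
  have g: "A *v g z = z" for z using \<open>surj ((*v) A)\<close> unfolding g_def by (rule surj_f_inv_f)
  define B where "B = (\<chi> i j. g (axis j 1) $ i)"
  have AB: "A ** B = mat 1"
  proof -
    have "(A ** B) $ i $ j = mat 1 $ i $ j" for i j
    proof -
      have "(A ** B) $ i $ j = (A *v g (axis j 1)) $ i"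
        by (simp add: matrix_matrix_mult_def matrix_vector_mult_def B_def)
      also have "\<dots> = mat 1 $ i $ j" using g by (simp add: mat_def axis_def)
      finally show ?thesis .
    qed
    then show ?thesis by (simp add: vec_eq_iff)
  qed
  have BA: "B ** A = mat 1"
  proof -
    have "(B ** A) *v x = mat 1 *v x" for x
    proof -
      have "A *v ((B ** A) *v x) = ((A ** B) ** A) *v x"
        by (simp add: matrix_vector_mul_assoc matrix_mul_assoc)
      then have "A *v ((B ** A) *v x) = A *v x" using AB by simp
      then show ?thesis using inj by (simp add: inj_eq)
    qed
    then show ?thesis by (simp add: matrix_eq)
  qed
  show ?thesis unfolding invertible_def using AB BA by blast
qed

lemma zero_of3: "(c::3) \<noteq> 0 \<Longrightarrow> x * c = 0 \<Longrightarrow> x = 0"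
  by (metis mult.assoc mult_1_right mult_zero_left sq3)

lemma mv_neg: "A *v (- x) = - (A *v (x::'a::ring_1^'n))"
  by (simp add: vec_eq_iff matrix_vector_mult_def sum_negf)

lemma pair3:
  assumes "(c::3) \<noteq> 0" shows "{c *s v + a, - (c *s v) + a} = {a + v, a - v}"
proof -
  have "c = 1 \<or> c = -1" using ex3[of c] assms by blast
  then show ?thesis
  proof
    assume c: "c = 1"
    have h: "c *s v + a = a + v" "- (c *s v) + a = a - v" using c by (simp_all add: algebra_simps)
    show ?thesis unfolding h by (rule refl)
  next
    assume c: "c = -1"
    have h: "c *s v + a = a - v" "- (c *s v) + a = a + v" using c
      by (simp_all add: algebra_simps vector_smult_lneg)
    show ?thesis unfolding h by (rule insert_commute)
  qed
qed

definition D0 :: "pt set" where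
  "D0 = {axis 1 1, - axis 1 1} \<union> {axis 2 1, - axis 2 1} \<union> {axis 3 1, - axis 3 1} \<union> {axis 4 1, - axis 4 1}
       \<union> {(\<chi> i. 1), - (\<chi> i. 1)}"

lemma negcomb:
  assumes "v5 = x1 *s p + x2 *s q + x3 *s r + x4 *s (s::pt)" "x1 = 0"
  shows "(-1) *s v5 + x2 *s q + x3 *s r + x4 *s s = 0"
  using assms by (simp add: vec_eq_iff algebra_simps)

lemma core:
  assumes n1: "\<not> orth4 v1 v2 v3 v4" and n2: "\<not> orth4 v2 v3 v4 v5" and n3: "\<not> orth4 v1 v3 v4 v5"
    and n4: "\<not> orth4 v1 v2 v4 v5" and n5: "\<not> orth4 v1 v2 v3 v5"
  shows "\<exists>A. invertible A \<and> (\<lambda>x. A *v x + a) ` D0 =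
     {a+v1,a-v1} \<union> {a+v2,a-v2} \<union> {a+v3,a-v3} \<union> {a+v4,a-v4} \<union> {a+v5,a-v5}"
proof -
  have "surj (lc v1 v2 v3 v4)" by (rule finite_UNIV_inj_surj) (simp_all add: lc_inj[OF n1])
  then obtain w where w: "v5 = lc v1 v2 v3 v4 w" by (metis surjD)
  have w0: "v5 = w$1 *s v1 + w$2 *s v2 + w$3 *s v3 + w$4 *s v4" using w unfolding lc_def .
  have m1: "(-1::3) \<noteq> 0" by simp
  have w1: "w$1 \<noteq> 0"
  proof
    assume "w$1 = 0"
    then have "(-1) *s v5 + w$2 *s v2 + w$3 *s v3 + w$4 *s v4 = 0" using w0 negcomb by blast
    moreover have "\<not> orth4 v5 v2 v3 v4" using n2 unfolding orth4_def by blast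
    ultimately show False using indep m1 by blast
  qed
  have w2: "w$2 \<noteq> 0"
  proof
    assume "w$2 = 0"
    moreover have "v5 = w$2 *s v2 + w$1 *s v1 + w$3 *s v3 + w$4 *s v4" using w0 by (simp add: ac_simps)
    ultimately have "(-1) *s v5 + w$1 *s v1 + w$3 *s v3 + w$4 *s v4 = 0" using negcomb by blast
    moreover have "\<not> orth4 v5 v1 v3 v4" using n3 unfolding orth4_def by blast
    ultimately show False using indep m1 by blast
  qed
  have w3: "w$3 \<noteq> 0"
  proof
    assume "w$3 = 0"
    moreover have "v5 = w$3 *s v3 + w$1 *s v1 + w$2 *s v2 + w$4 *s v4" using w0 by (simp add: ac_simps)
    ultimately have "(-1) *s v5 + w$1 *s v1 + w$2 *s v2 + w$4 *s v4 = 0" using negcomb by blast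
    moreover have "\<not> orth4 v5 v1 v2 v4" using n4 unfolding orth4_def by blast
    ultimately show False using indep m1 by blast
  qed
  have w4: "w$4 \<noteq> 0"
  proof
    assume "w$4 = 0"
    moreover have "v5 = w$4 *s v4 + w$1 *s v1 + w$2 *s v2 + w$3 *s v3" using w0 by (simp add: ac_simps)
    ultimately have "(-1) *s v5 + w$1 *s v1 + w$2 *s v2 + w$3 *s v3 = 0" using negcomb by blast
    moreover have "\<not> orth4 v5 v1 v2 v3" using n5 unfolding orth4_def by blast
    ultimately show False using indep m1 by blast
  qed
  define A where "A = colmat (w$1 *s v1) (w$2 *s v2) (w$3 *s v3) (w$4 *s v4)"
  have Ax: "A *v x = (x$1 * w$1) *s v1 + (x$2 * w$2) *s v2 + (x$3 * w$3) *s v3 + (x$4 * w$4) *s v4" for x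
    unfolding A_def colmat_mult lc_def vector_smult_assoc ..
  have invA: "invertible A"
  proof (rule inv_of_inj)
    fix x assume "A *v x = 0"
    then have "(x$1 * w$1) *s v1 + (x$2 * w$2) *s v2 + (x$3 * w$3) *s v3 + (x$4 * w$4) *s v4 = 0"
      unfolding Ax .
    then have h: "x$1 * w$1 = 0 \<and> x$2 * w$2 = 0 \<and> x$3 * w$3 = 0 \<and> x$4 * w$4 = 0"
      by (rule indep[OF n1])
    have "x$1 = 0" "x$2 = 0" "x$3 = 0" "x$4 = 0"
      using h zero_of3[OF w1] zero_of3[OF w2] zero_of3[OF w3] zero_of3[OF w4] by blast+
    then show "x = 0" unfolding vec4_eq by simp
  qed
  have e1: "A *v axis 1 1 = w$1 *s v1" unfolding Ax by (simp add: vec_eq_iff axis_def)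
  have e2: "A *v axis 2 1 = w$2 *s v2" unfolding Ax by (simp add: vec_eq_iff axis_def)
  have e3: "A *v axis 3 1 = w$3 *s v3" unfolding Ax by (simp add: vec_eq_iff axis_def)
  have e4: "A *v axis 4 1 = w$4 *s v4" unfolding Ax by (simp add: vec_eq_iff axis_def)
  have e5: "A *v (\<chi> i. 1) = 1 *s v5" unfolding Ax w0 by (simp add: vec_eq_iff)
  have "(\<lambda>x. A *v x + a) ` D0 =
     {a+v1,a-v1} \<union> {a+v2,a-v2} \<union> {a+v3,a-v3} \<union> {a+v4,a-v4} \<union> {a+v5,a-v5}"
    by (simp only: D0_def image_Un image_insert image_empty mv_neg e1 e2 e3 e4 e5
       pair3[OF w1] pair3[OF w2] pair3[OF w3] pair3[OF w4] pair3[OF one_neq_zero])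
  then show ?thesis using invA by blast
qed

lemma demicap_std:
  assumes "is_demicap D"
  shows "\<exists>A a. invertible (A::3^4^4) \<and> (\<lambda>x. A *v x + a) ` D0 = D"
proof -
  obtain a where "is_demicap_anchor a D" using assms unfolding is_demicap_def by blast
  then obtain v1 v2 v3 v4 v5 where
    D: "D = {a+v1,a-v1} \<union> {a+v2,a-v2} \<union> {a+v3,a-v3} \<union> {a+v4,a-v4} \<union> {a+v5,a-v5}"
    and n: "\<not> orth4 v1 v2 v3 v4" "\<not> orth4 v2 v3 v4 v5" "\<not> orth4 v1 v3 v4 v5"
     "\<not> orth4 v1 v2 v4 v5" "\<not> orth4 v1 v2 v3 v5"
    using demicap_vecs by blast
  show ?thesis using core[OF n, of a] D by blast
qed

theorem theorem3p6:
  assumes "is_demicap D1" and "is_demicap D2"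
  shows "\<exists>(A::3^4^4) (b::3^4). invertible A \<and> (\<lambda>v. A *v v + b) ` D1 = D2"
proof -
  obtain A1 a1 where 1: "invertible A1" "(\<lambda>x. A1 *v x + a1) ` D0 = D1"
    using demicap_std[OF assms(1)] by blast
  obtain A2 a2 where 2: "invertible A2" "(\<lambda>x. A2 *v x + a2) ` D0 = D2"
    using demicap_std[OF assms(2)] by blast
  obtain B1 where B1: "A1 ** B1 = mat 1" "B1 ** A1 = mat 1"
    using 1(1) unfolding invertible_def by blast
  have invB1: "invertible B1" unfolding invertible_def using B1 by blast
  define A where "A = A2 ** B1"
  define b where "b = a2 - A2 *v (B1 *v a1)"
  have comp: "A *v (A1 *v x + a1) + b = A2 *v x + a2" for x
  proof -
    have "A *v (A1 *v x) = A2 *v (B1 *v (A1 *v x))"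
      unfolding A_def by (rule matrix_vector_mul_assoc[symmetric])
    also have "B1 *v (A1 *v x) = x" by (simp add: matrix_vector_mul_assoc B1(2))
    finally have "A *v (A1 *v x) = A2 *v x" .
    moreover have "A *v a1 = A2 *v (B1 *v a1)"
      unfolding A_def by (rule matrix_vector_mul_assoc[symmetric])
    ultimately show ?thesis unfolding b_def matrix_vector_right_distrib by simp
  qed
  have "(\<lambda>v. A *v v + b) ` D1 = D2"
    unfolding 1(2)[symmetric] 2(2)[symmetric] image_image comp ..
  moreover have "invertible A" unfolding A_def using 2(1) invB1 by (rule invertible_mult)
  ultimately show ?thesis by blast
qed

end
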